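(* Let $t\geqslant 2$ be an integer, let $r\in\{2t,2t+1\}$, and let $n\geqslant 2r$. Then $$N(n,2r,r)=\begin{cases}\binom{2t}{t}, & \text{if } r=2t,\\[2pt] 2\binom{2t-2}{t-1}, & \text{if } r=2t+1.\end{cases}$$
   Context: $\mathrm{Sym}_n$ is the symmetric group of permutations of $[n]=\{1,\dots,n\}$, and $I_n$ is the identity permutation. The Hamming distance between $\pi,\tau\in\mathrm{Sym}_n$ is $d(\pi,\tau)=|\{i\in[n]:\pi(i)\neq\tau(i)\}|$. The ball of radius $r$ is $B_r(\pi)=\{\tau\in\mathrm{Sym}_n: d(\pi,\tau)\leqslant r\}$. For integers $d,r$ define $I(n,d,r)=\max_{\pi,\tau\in\mathrm{Sym}_n,\ d(\pi,\tau)=d}|B_r(\pi)\cap B_r(\tau)|$ (taken to be $0$ if the intersections are all empty) and $N(n,d,r)=\max_{\pi,\tau\in\mathrm{Sym}_n,\ d(\pi,\tau)\geqslant d}|B_r(\pi)\cap B_r(\tau)|=\max_{k\geqslant d}I(n,k,r)$. *)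

theory Defs
  imports Main "HOL-Combinatorics.Permutations"
begin

definition Sym :: "nat \<Rightarrow> (nat \<Rightarrow> nat) set" where
  "Sym n = {p. p permutes {1..n}}"

definition hdist :: "nat \<Rightarrow> (nat \<Rightarrow> nat) \<Rightarrow> (nat \<Rightarrow> nat) \<Rightarrow> nat" where
  "hdist n p q = card {i \<in> {1..n}. p i \<noteq> q i}"

definition ball_perm :: "nat \<Rightarrow> nat \<Rightarrow> (nat \<Rightarrow> nat) \<Rightarrow> (nat \<Rightarrow> nat) set" where
  "ball_perm n r p = {q \<in> Sym n. hdist n p q \<le> r}"

definition Iint :: "nat \<Rightarrow> nat \<Rightarrow> nat \<Rightarrow> nat" where
  "Iint n d r = Max (insert 0 {card (ball_perm n r p \<inter> ball_perm n r q) | p q.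
      p \<in> Sym n \<and> q \<in> Sym n \<and> hdist n p q = d})"

definition Nint :: "nat \<Rightarrow> nat \<Rightarrow> nat \<Rightarrow> nat" where
  "Nint n d r = Max (insert 0 {card (ball_perm n r p \<inter> ball_perm n r q) | p q.
      p \<in> Sym n \<and> q \<in> Sym n \<and> d \<le> hdist n p q})"

end

theory Submission
  imports Defs "HOL-Combinatorics.Multiset_Permutations" "HOL-Combinatorics.Orbits"
begin

lemma sperner:
  assumes fin: "finite X" and FX: "F \<subseteq> Pow X"
    and anti: "\<And>A B. A \<in> F \<Longrightarrow> B \<in> F \<Longrightarrow> A \<subseteq> B \<Longrightarrow> A = B"
  shows "card F \<le> card X choose (card X div 2)"
proof -
  define n where "n = card X"
  define M where "M = n choose (n div 2)"
  define L where "L A = {xs \<in> permutations_of_set X. set (take (card A) xs) = A}" for A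
  have finF: "finite F" using FX fin by (meson finite_Pow_iff finite_subset)
  have cardL: "card (L A) = fact (card A) * fact (n - card A)" if "A \<in> F" for A
  proof -
    have AX: "A \<subseteq> X" using that FX by auto
    have finA: "finite A" using AX fin finite_subset by auto
    define k where "k = card A"
    have bij: "bij_betw (\<lambda>xs. (take k xs, drop k xs)) (L A)
        (permutations_of_set A \<times> permutations_of_set (X - A))"
    proof (rule bij_betwI[where g = "\<lambda>(u,v). u @ v"])
      show "(\<lambda>xs. (take k xs, drop k xs)) \<in> L A \<rightarrow> permutations_of_set A \<times> permutations_of_set (X - A)"
      proof
        fix xs assume xs: "xs \<in> L A"
        hence s: "set xs = X" "distinct xs" "set (take k xs) = A"
          by (auto simp: L_def permutations_of_set_def k_def)
        have d: "distinct (take k xs @ drop k xs)" using s by simp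
        hence disj: "set (take k xs) \<inter> set (drop k xs) = {}" by (simp only: distinct_append)
        have "set (take k xs) \<union> set (drop k xs) = X"
          using s by (metis set_append append_take_drop_id)
        hence "set (drop k xs) = X - A" using disj s by auto
        thus "(take k xs, drop k xs) \<in> permutations_of_set A \<times> permutations_of_set (X - A)"
          using s by (auto simp: permutations_of_set_def distinct_take distinct_drop)
      qed
      show "(\<lambda>(u, v). u @ v) \<in> permutations_of_set A \<times> permutations_of_set (X - A) \<rightarrow> L A"
      proof
        fix uv assume "uv \<in> permutations_of_set A \<times> permutations_of_set (X - A)"
        then obtain u v where uv: "uv = (u,v)" "set u = A" "distinct u" "set v = X - A" "distinct v"
          by (auto simp: permutations_of_set_def)
        have lu: "length u = k" using uv by (metis distinct_card k_def)
        show "(\<lambda>(u, v). u @ v) uv \<in> L A"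
          using uv lu AX by (auto simp: L_def permutations_of_set_def k_def)
      qed
      show "\<And>x. x \<in> L A \<Longrightarrow> (case (take k x, drop k x) of (u, v) \<Rightarrow> u @ v) = x" by simp
      show "\<And>y. y \<in> permutations_of_set A \<times> permutations_of_set (X - A) \<Longrightarrow>
         (take k (case y of (u, v) \<Rightarrow> u @ v), drop k (case y of (u, v) \<Rightarrow> u @ v)) = y"
      proof -
        fix y assume "y \<in> permutations_of_set A \<times> permutations_of_set (X - A)"
        then obtain u v where uv: "y = (u,v)" "set u = A" "distinct u"
          by (auto simp: permutations_of_set_def)
        have lu: "length u = k" using uv by (metis distinct_card k_def)
        show "(take k (case y of (u, v) \<Rightarrow> u @ v), drop k (case y of (u, v) \<Rightarrow> u @ v)) = y"
          using uv lu by simp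
      qed
    qed
    have "card (L A) = card (permutations_of_set A \<times> permutations_of_set (X - A))"
      using bij_betw_same_card[OF bij] .
    also have "\<dots> = fact (card A) * fact (card (X - A))"
      using finA fin by (simp add: card_cartesian_product)
    also have "card (X - A) = n - card A" using AX finA by (simp add: n_def card_Diff_subset)
    finally show ?thesis .
  qed
  have disj: "L A \<inter> L B = {}" if "A \<in> F" "B \<in> F" "A \<noteq> B" for A B
  proof (rule ccontr)
    assume "L A \<inter> L B \<noteq> {}"
    then obtain xs where "xs \<in> L A" "xs \<in> L B" by auto
    hence a: "set (take (card A) xs) = A" and b: "set (take (card B) xs) = B" by (auto simp: L_def)
    have sub: "set (take i xs) \<subseteq> set (take j xs)" if "i \<le> j" for i j
      using that by (metis min.absorb1 set_take_subset take_take)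
    show False
    proof (cases "card A \<le> card B")
      case True thus False using sub[OF True] a b anti that by metis
    next
      case False thus False using sub[of "card B" "card A"] a b anti that by (metis nat_le_linear)
    qed
  qed
  have "(\<Sum>A\<in>F. card (L A)) = card (\<Union>A\<in>F. L A)"
    using finF disj by (subst card_UN_disjoint) (auto simp: L_def)
  also have "\<dots> \<le> card (permutations_of_set X)"
    by (rule card_mono) (auto simp: L_def)
  also have "\<dots> = fact n" using fin by (simp add: n_def)
  finally have S: "(\<Sum>A\<in>F. card (L A)) \<le> fact n" .
  have each: "fact n \<le> M * card (L A)" if "A \<in> F" for A
  proof -
    have kn: "card A \<le> n" using that FX fin by (auto simp: n_def intro: card_mono)
    have "fact n = fact (card A) * fact (n - card A) * (n choose card A)"
      using binomial_fact_lemma[OF kn] by simp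
    also have "\<dots> \<le> fact (card A) * fact (n - card A) * M"
      unfolding M_def by (intro mult_le_mono2 binomial_maximum)
    finally show ?thesis using cardL[OF that] by (simp add: mult.commute)
  qed
  have "card F * fact n = (\<Sum>A\<in>F. fact n)" by simp
  also have "\<dots> \<le> (\<Sum>A\<in>F. M * card (L A))" by (rule sum_mono) (rule each)
  also have "\<dots> = M * (\<Sum>A\<in>F. card (L A))" by (simp add: sum_distrib_left)
  also have "\<dots> \<le> M * fact n" using S by simp
  finally have "card F * fact n \<le> M * fact n" .
  hence "card F \<le> M" by simp
  thus ?thesis by (simp add: M_def n_def)
qed


lemma central_mono: "m \<le> m' \<Longrightarrow> m choose (m div 2) \<le> m' choose (m' div 2)"
  using binomial_right_mono[of m m' "m div 2"] binomial_maximum[of m' "m div 2"] by linarith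

lemma wsplit:
  assumes "finite A" "\<forall>b\<in>A. 2 \<le> (w::'a \<Rightarrow> nat) b"
  shows "sum w A = sum (\<lambda>b. w b - 2) A + 2 * card A"
proof -
  have "sum w A = sum (\<lambda>b. (w b - 2) + 2) A" using assms(2) by (intro sum.cong) auto
  also have "\<dots> = sum (\<lambda>b. w b - 2) A + sum (\<lambda>b. 2) A" by (rule sum.distrib)
  also have "\<dots> = sum (\<lambda>b. w b - 2) A + 2 * card A" by simp
  finally show ?thesis .
qed

lemma G_anti:
  assumes "finite P" "\<forall>b\<in>P. 2 \<le> (w::'a \<Rightarrow> nat) b"
    and "Q \<subseteq> P" "Q' \<subseteq> P" "sum w Q = r" "sum w Q' = r" "Q \<subseteq> Q'"
  shows "Q = Q'"
proof -
  have fQ': "finite Q'" using assms finite_subset by auto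
  have "sum w Q' = sum w Q + sum w (Q' - Q)"
    using fQ' assms(7) by (metis add.commute sum.subset_diff)
  hence "sum w (Q' - Q) = 0" using assms by simp
  hence "\<forall>b\<in>Q'-Q. w b = 0" using fQ' by simp
  hence "Q' - Q = {}" using assms(2,4) by fastforce
  thus ?thesis using assms(7) by auto
qed

lemma weight_even:
  assumes fin: "finite P" and w2: "\<forall>b\<in>P. 2 \<le> (w::'a \<Rightarrow> nat) b" and tot: "sum w P = 2*r"
  shows "card {Q. Q \<subseteq> P \<and> sum w Q = r} \<le> r choose (r div 2)"
proof -
  have "2 * card P \<le> 2 * r"
    using wsplit[OF fin w2] tot by simp
  hence cP: "card P \<le> r" by simp
  have "card {Q. Q \<subseteq> P \<and> sum w Q = r} \<le> card P choose (card P div 2)"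
    by (rule sperner[OF fin]) (blast, simp, metis G_anti[OF fin w2])
  also have "\<dots> \<le> r choose (r div 2)" by (rule central_mono[OF cP])
  finally show ?thesis .
qed

lemma weight_odd:
  assumes fin: "finite P" and w2: "\<forall>b\<in>P. 2 \<le> (w::'a \<Rightarrow> nat) b" and tot: "sum w P = 2*r"
    and r: "r = 2*t+1" and t: "t \<ge> 1"
  shows "card {Q. Q \<subseteq> P \<and> sum w Q = r} \<le> 2 * ((2*t-2) choose (t-1))"
proof -
  define G where "G = {Q. Q \<subseteq> P \<and> sum w Q = r}"
  have cP: "card P \<le> r"
    using wsplit[OF fin w2] tot by simp
  show ?thesis
  proof (cases "G = {}")
    case True hence "card G = 0" by simp
    thus ?thesis unfolding G_def by simp
  next
    case False
    then obtain Q0 where Q0: "Q0 \<subseteq> P" "sum w Q0 = r" by (auto simp: G_def)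
    have "\<exists>b\<in>Q0. odd (w b)"
    proof (rule ccontr)
      assume "\<not> ?thesis"
      hence "even (sum w Q0)" by (auto intro: dvd_sum)
      thus False using Q0 r by simp
    qed
    then obtain b0 where b0: "b0 \<in> P" "odd (w b0)" using Q0 by auto
    define G0 where "G0 = {Q\<in>G. b0 \<notin> Q}"
    define G1 where "G1 = {Q\<in>G. b0 \<in> Q}"
    have finG: "finite G" unfolding G_def using fin by simp
    have "card G = card G0 + card G1"
      unfolding G0_def G1_def using finG
      by (subst card_Un_disjoint[symmetric]) (auto intro: arg_cong[where f=card])
    moreover have "card G1 \<le> card G0"
    proof -
      have "inj_on (\<lambda>Q. P - Q) G1" by (rule inj_onI) (auto simp: G1_def G_def)
      moreover have "(\<lambda>Q. P - Q) ` G1 \<subseteq> G0"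
      proof
        fix X assume "X \<in> (\<lambda>Q. P - Q) ` G1"
        then obtain Q where Q: "Q \<subseteq> P" "sum w Q = r" "b0 \<in> Q" "X = P - Q"
          by (auto simp: G1_def G_def)
        have "sum w P = sum w Q + sum w (P - Q)"
          using fin Q by (metis add.commute sum.subset_diff)
        thus "X \<in> G0" using Q tot by (auto simp: G0_def G_def)
      qed
      moreover have "finite G0" using finG by (simp add: G0_def)
      ultimately show ?thesis by (metis card_inj_on_le)
    qed
    moreover have "card G0 \<le> (2*t-2) choose (t-1)"
    proof (cases "card P \<le> 2*t - 1")
      case True
      have "card G0 \<le> card (P - {b0}) choose (card (P - {b0}) div 2)"
        by (rule sperner) (use fin in \<open>auto simp: G0_def G_def\<close>, metis G_anti[OF fin w2])
      also have "\<dots> \<le> (2*t-2) choose ((2*t-2) div 2)"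
        by (rule central_mono) (use True b0 fin in simp)
      also have "(2*t-2) div 2 = t - 1" by simp
      finally show ?thesis .
    next
      case False
      hence cP2: "card P \<ge> 2*t" by simp
      show ?thesis
      proof (cases "G0 = {}")
        case True thus ?thesis by simp
      next
        case False
        then obtain Q1 where Q1: "Q1 \<subseteq> P" "sum w Q1 = r" "b0 \<notin> Q1" by (auto simp: G0_def G_def)
        have "\<exists>b\<in>Q1. odd (w b)"
        proof (rule ccontr)
          assume "\<not> ?thesis"
          hence "even (sum w Q1)" by (auto intro: dvd_sum)
          thus False using Q1 r by simp
        qed
        then obtain e where e: "e \<in> P" "e \<in> Q1" "odd (w e)" using Q1 by auto
        have eb: "e \<noteq> b0" using e Q1 by auto
        define w' where "w' = (\<lambda>b. w b - 2)"
        have w'b0: "w' b0 \<ge> 1" using b0 w2 unfolding w'_def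
          by (metis Suc_leI dvd_refl le_neq_implies_less zero_less_diff One_nat_def)
        have w'e: "w' e \<ge> 1" using e w2 unfolding w'_def
          by (metis Suc_leI dvd_refl le_neq_implies_less zero_less_diff One_nat_def)
        have sP: "sum w' P + 2 * card P = 4*t+2" using wsplit[OF fin w2] tot r by (simp add: w'_def)
        define R where "R = P - {b0, e}"
        have s1: "sum w' P = w' b0 + sum w' (P - {b0})" using fin b0(1) by (rule sum.remove)
        have s2: "sum w' (P - {b0}) = w' e + sum w' (P - {b0} - {e})"
          using fin e eb by (intro sum.remove) auto
        have "P - {b0} - {e} = R" unfolding R_def by auto
        hence "sum w' P = w' b0 + w' e + sum w' R" using s1 s2 by simp
        hence eqs: "w' b0 = 1" "w' e = 1" "sum w' R = 0" "card P = 2*t"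
          using sP cP2 w'b0 w'e by linarith+
        have finR: "finite R" using fin R_def by simp
        have R0: "\<forall>b\<in>R. w' b = 0" using eqs(3) finR by simp
        have cR: "card R = 2*t - 2" using eqs(4) fin b0 e eb unfolding R_def
          by (simp add: card_Diff_subset)
        have "inj_on (\<lambda>Q. Q - {e}) G0"
        proof (rule inj_onI)
          fix Q Q' assume A: "Q \<in> G0" "Q' \<in> G0" "Q - {e} = Q' - {e}"
          have "e \<in> Q" if "Q \<in> G0" for Q
          proof (rule ccontr)
            assume ne: "e \<notin> Q"
            have QR: "Q \<subseteq> R" "finite Q" using that ne fin unfolding G0_def G_def R_def
              by (auto intro: finite_subset)
            have "\<forall>b\<in>Q. 2 \<le> w b" using w2 QR by (auto simp: R_def)
            hence "sum w Q = sum w' Q + 2 * card Q" using wsplit[OF QR(2)] by (simp add: w'_def)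
            moreover have "sum w' Q = 0" using R0 QR by (auto intro: sum.neutral)
            ultimately have "even (sum w Q)" by simp
            thus False using that r by (simp add: G0_def G_def)
          qed
          thus "Q = Q'" using A by blast
        qed
        moreover have "(\<lambda>Q. Q - {e}) ` G0 \<subseteq> {S. S \<subseteq> R \<and> card S = t - 1}"
        proof
          fix X assume "X \<in> (\<lambda>Q. Q - {e}) ` G0"
          then obtain Q where Q: "Q \<subseteq> P" "sum w Q = r" "b0 \<notin> Q" "X = Q - {e}"
            by (auto simp: G0_def G_def)
          have finQ: "finite Q" using Q fin finite_subset by auto
          have XR: "X \<subseteq> R" using Q by (auto simp: R_def)
          have "sum w Q = sum w' Q + 2 * card Q" using wsplit[OF finQ] w2 Q by (auto simp: w'_def)
          moreover have "sum w' Q = (if e \<in> Q then 1 else 0)"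
          proof -
            have "sum w' Q = sum w' (Q - {e}) + (if e \<in> Q then w' e else 0)"
              using finQ by (cases "e \<in> Q") (auto simp: sum.remove)
            moreover have "sum w' (Q - {e}) = 0" using R0 XR Q by (auto intro: sum.neutral)
            ultimately show ?thesis using eqs by simp
          qed
          ultimately have eq: "2*t+1 = (if e \<in> Q then 1 else 0) + 2 * card Q" using Q r by simp
          have eQ: "e \<in> Q"
          proof (rule ccontr)
            assume "e \<notin> Q"
            with eq have "2*t+1 = 2*card Q" by simp
            thus False by presburger
          qed
          hence "card Q = t" using eq by simp
          hence "card X = t - 1" using Q finQ eQ by simp
          thus "X \<in> {S. S \<subseteq> R \<and> card S = t - 1}" using XR by simp
        qed
        ultimately have "card G0 \<le> card {S. S \<subseteq> R \<and> card S = t - 1}"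
          using finR by (intro card_inj_on_le) auto
        also have "\<dots> = (2*t-2) choose (t-1)" using n_subsets[OF finR] cR by simp
        finally show ?thesis .
      qed
    qed
    ultimately show ?thesis unfolding G_def[symmetric] by linarith
  qed
qed


lemma orbit_sub_inv:
  assumes "f ` A \<subseteq> A" "i \<in> A" shows "orbit f i \<subseteq> A"
proof
  fix y assume "y \<in> orbit f i" thus "y \<in> A" by induct (use assms in auto)
qed

lemma orbit_same:
  assumes "permutation f" "y \<in> orbit f x" shows "orbit f y = orbit f x"
proof
  show "orbit f y \<subseteq> orbit f x" using assms(2) orbit_trans by fast
  have "x \<in> orbit f y" using orbit_swap[OF permutation_self_in_orbit[OF assms(1)] assms(2)] .
  thus "orbit f x \<subseteq> orbit f y" using orbit_trans by fast
qed

lemma upper_red: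
  fixes p q :: "nat \<Rightarrow> nat"
  assumes p: "p \<in> Sym n" and q: "q \<in> Sym n" and d: "2*r \<le> hdist n p q"
    and ne: "ball_perm n r p \<inter> ball_perm n r q \<noteq> {}"
  shows "\<exists>P::nat set set. finite P \<and> (\<forall>b\<in>P. 2 \<le> card b) \<and> sum card P = 2*r \<and>
     card (ball_perm n r p \<inter> ball_perm n r q) \<le> card {Q. Q \<subseteq> P \<and> sum card Q = r}"
proof -
  define S where "S = {1..n}"
  have pS: "p permutes S" and qS: "q permutes S" using p q by (auto simp: Sym_def S_def)
  have finS: "finite S" by (simp add: S_def)
  define X where "X = ball_perm n r p \<inter> ball_perm n r q"
  define D where "D = {i\<in>S. p i \<noteq> q i}"
  define A where "A s = {i\<in>S. p i \<noteq> s i}" for s :: "nat \<Rightarrow> nat"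
  have finD: "finite D" using finS by (simp add: D_def)
  have key: "A s \<subseteq> D \<and> card (A s) = r \<and> card D = 2*r \<and>
       (\<forall>i. s i = (if i \<in> A s then q i else p i))" if sX: "s \<in> X" for s
  proof -
    define B where "B = {i\<in>S. q i \<noteq> s i}"
    have sS: "s permutes S" using sX by (auto simp: X_def ball_perm_def Sym_def S_def)
    have cA: "card (A s) \<le> r" using sX by (auto simp: X_def ball_perm_def hdist_def A_def S_def)
    have cB: "card B \<le> r" using sX by (auto simp: X_def ball_perm_def hdist_def B_def S_def)
    have cD: "2*r \<le> card D" using d by (simp add: hdist_def D_def S_def)
    have finA: "finite (A s)" and finB: "finite B" using finS by (auto simp: A_def B_def)
    have DAB: "D \<subseteq> A s \<union> B" by (auto simp: D_def A_def B_def)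
    have "card D \<le> card (A s \<union> B)" using DAB finA finB by (intro card_mono) auto
    moreover have "card (A s \<union> B) + card (A s \<inter> B) = card (A s) + card B"
      using card_Un_Int[OF finA finB] by simp
    ultimately have AB: "card (A s \<inter> B) = 0" and cAr: "card (A s) = r" and cD2: "card D = 2*r"
      using cA cB cD by linarith+
    have disj: "A s \<inter> B = {}" using AB finA by simp
    have AD: "A s \<subseteq> D" using disj by (auto simp: A_def B_def D_def)
    have "s i = (if i \<in> A s then q i else p i)" for i
    proof (cases "i \<in> S")
      case True thus ?thesis using disj by (auto simp: A_def B_def)
    next
      case False thus ?thesis
        using permutes_not_in[OF sS] permutes_not_in[OF pS] by (simp add: A_def)
    qed
    thus ?thesis using AD cAr cD2 by blast
  qed
  obtain s0 where "s0 \<in> X" using ne X_def by auto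
  hence cD: "card D = 2*r" using key by blast
  define \<rho> where "\<rho> = inv p \<circ> q"
  have \<rho>S: "\<rho> permutes S" unfolding \<rho>_def by (intro permutes_compose qS permutes_inv pS)
  have \<rho>perm: "permutation \<rho>" using permutes_imp_permutation[OF finS \<rho>S] .
  have p\<rho>: "p (\<rho> i) = q i" for i by (simp add: \<rho>_def permutes_inverses(1)[OF pS])
  have \<rho>D: "\<rho> i \<noteq> i" if "i \<in> D" for i using that p\<rho>[of i] by (auto simp: D_def)
  have \<rho>inS: "\<rho> i \<in> S" if "i \<in> S" for i using that permutes_in_image[OF \<rho>S] by simp
  have DD: "\<rho> ` D \<subseteq> D"
  proof
    fix y assume "y \<in> \<rho> ` D" then obtain i where i: "i \<in> D" "y = \<rho> i" by auto
    have "p y \<noteq> q y"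
    proof
      assume "p y = q y"
      hence "q i = q y" using p\<rho> i by simp
      hence "i = y" using permutes_inj[OF qS] by (simp add: inj_eq)
      thus False using \<rho>D[OF i(1)] i by simp
    qed
    thus "y \<in> D" using \<rho>inS i by (auto simp: D_def)
  qed
  have inv: "\<rho> ` A s \<subseteq> A s" if sX: "s \<in> X" for s
  proof
    fix y assume "y \<in> \<rho> ` A s" then obtain i where i: "i \<in> A s" "y = \<rho> i" by auto
    have sS: "s permutes S" using sX by (auto simp: X_def ball_perm_def Sym_def S_def)
    have iD: "i \<in> D" using key[OF sX] i by auto
    show "y \<in> A s"
    proof (rule ccontr)
      assume "y \<notin> A s"
      hence "s y = p y" using key[OF sX] by metis
      also have "\<dots> = q i" using p\<rho> i by simp
      also have "\<dots> = s i" using key[OF sX] i by metis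
      finally have "y = i" using permutes_inj[OF sS] by (simp add: inj_eq)
      thus False using \<rho>D[OF iD] i by simp
    qed
  qed
  define Orb where "Orb i = orbit \<rho> i" for i
  define P where "P = Orb ` D"
  have Oin: "i \<in> Orb i" for i by (simp add: Orb_def permutation_self_in_orbit[OF \<rho>perm])
  have OD: "Orb i \<subseteq> D" if "i \<in> D" for i using orbit_sub_inv[OF DD that] by (simp add: Orb_def)
  have finP: "finite P" using finD by (simp add: P_def)
  have finb: "finite b" if "b \<in> P" for b using that OD finD by (auto simp: P_def intro: finite_subset)
  have c2: "2 \<le> card b" if bP: "b \<in> P" for b
  proof -
    obtain i where i: "i \<in> D" "b = Orb i" using bP by (auto simp: P_def)
    have "{i, \<rho> i} \<subseteq> b" using i Oin by (auto simp: Orb_def intro: orbit.base)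
    hence "card {i, \<rho> i} \<le> card b" using finb[OF bP] by (intro card_mono)
    thus ?thesis using \<rho>D[OF i(1)] by simp
  qed
  have pdisj: "pairwise disjnt P"
  proof (rule pairwiseI)
    fix b b' assume "b \<in> P" "b' \<in> P" "b \<noteq> b'"
    then obtain i j where ij: "b = Orb i" "b' = Orb j" by (auto simp: P_def)
    show "disjnt b b'"
    proof (rule ccontr)
      assume "\<not> disjnt b b'"
      then obtain y where "y \<in> Orb i" "y \<in> Orb j" using ij by (auto simp: disjnt_def)
      hence "Orb y = Orb i" "Orb y = Orb j" unfolding Orb_def using orbit_same[OF \<rho>perm] by blast+
      thus False using ij \<open>b \<noteq> b'\<close> by simp
    qed
  qed
  have UP: "\<Union>P = D" using OD Oin by (auto simp: P_def)
  have sumP: "sum card P = 2*r" using card_Union_disjoint[OF pdisj finb] UP cD by simp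
  define \<phi> where "\<phi> s = {b\<in>P. b \<subseteq> A s}" for s
  have U\<phi>: "\<Union>(\<phi> s) = A s" if sX: "s \<in> X" for s
  proof
    show "\<Union>(\<phi> s) \<subseteq> A s" by (auto simp: \<phi>_def)
    show "A s \<subseteq> \<Union>(\<phi> s)"
    proof
      fix i assume iA: "i \<in> A s"
      have iD: "i \<in> D" using key[OF sX] iA by auto
      have "Orb i \<subseteq> A s" using orbit_sub_inv[OF inv[OF sX] iA] by (simp add: Orb_def)
      thus "i \<in> \<Union>(\<phi> s)" using iD Oin by (auto simp: \<phi>_def P_def)
    qed
  qed
  have "inj_on \<phi> X"
  proof (rule inj_onI)
    fix s s' assume sX: "s \<in> X" and s'X: "s' \<in> X" and e: "\<phi> s = \<phi> s'"
    have "A s = A s'" using U\<phi>[OF sX] U\<phi>[OF s'X] e by simp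
    thus "s = s'" using key[OF sX] key[OF s'X] by (metis ext)
  qed
  moreover have "\<phi> ` X \<subseteq> {Q. Q \<subseteq> P \<and> sum card Q = r}"
  proof
    fix Q assume "Q \<in> \<phi> ` X"
    then obtain s where sX: "s \<in> X" and Q: "Q = \<phi> s" by auto
    have QP: "Q \<subseteq> P" using Q by (auto simp: \<phi>_def)
    have "sum card Q = card (\<Union>Q)"
      using card_Union_disjoint[of Q] pairwise_subset[OF pdisj QP] finb QP by (metis subsetD)
    also have "\<dots> = r" using U\<phi>[OF sX] key[OF sX] Q by simp
    finally show "Q \<in> {Q. Q \<subseteq> P \<and> sum card Q = r}" using QP by simp
  qed
  moreover have "finite {Q. Q \<subseteq> P \<and> sum card Q = r}" using finP by simp
  ultimately have "card X \<le> card {Q. Q \<subseteq> P \<and> sum card Q = r}" by (rule card_inj_on_le)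
  thus ?thesis using finP c2 sumP X_def by blast
qed


lemma permutesI_inj_surj:
  assumes "inj f" "surj f" "\<And>x. x \<notin> S \<Longrightarrow> f x = x" shows "f permutes S"
  unfolding permutes_def using assms by (metis injD surjD)

lemma construct:
  fixes \<tau> :: "nat \<Rightarrow> nat" and B :: "'k \<Rightarrow> nat set"
  assumes \<tau>S: "\<tau> permutes {1..n}" and finK: "finite K"
   and disj: "\<forall>k\<in>K. \<forall>k'\<in>K. k \<noteq> k' \<longrightarrow> B k \<inter> B k' = {}"
   and blk: "\<forall>k\<in>K. B k \<noteq> {} \<and> finite (B k) \<and> \<tau> ` B k \<subseteq> B k"
   and DB: "{i\<in>{1..n}. \<tau> i \<noteq> i} = \<Union>(B ` K)"
   and JJ: "\<forall>J\<in>JJ. J \<subseteq> K \<and> sum (\<lambda>k. card (B k)) J = r \<and> sum (\<lambda>k. card (B k)) (K - J) = r"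
  shows "card JJ \<le> card (ball_perm n r id \<inter> ball_perm n r \<tau>)"
proof -
  define S where "S = {1..n::nat}"
  define D where "D = {i\<in>S. \<tau> i \<noteq> i}"
  define AJ where "AJ J = \<Union>(B ` J)" for J
  define \<sigma> where "\<sigma> J i = (if i \<in> AJ J then \<tau> i else i)" for J i
  define X where "X = ball_perm n r id \<inter> ball_perm n r \<tau>"
  have DU: "D = AJ K" using DB by (simp add: D_def S_def AJ_def)
  have cardAJ: "card (AJ J) = sum (\<lambda>k. card (B k)) J" if "J \<subseteq> K" for J
    unfolding AJ_def using that finK disj blk
    by (intro card_UN_disjoint) (auto intro: finite_subset, blast)
  have AJD: "AJ J \<subseteq> D" if "J \<subseteq> K" for J using that DU by (auto simp: AJ_def)
  have finS: "finite S" by (simp add: S_def)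
  have \<tau>inj: "inj \<tau>" using permutes_inj[OF \<tau>S] .
  have mem: "\<sigma> J \<in> X" if JJJ: "J \<in> JJ" for J
  proof -
    have JK: "J \<subseteq> K" using JJ JJJ by auto
    let ?A = "AJ J"
    have finA: "finite ?A" using JK finK blk by (auto simp: AJ_def intro: finite_subset)
    have invA: "\<tau> ` ?A \<subseteq> ?A" using JK blk unfolding AJ_def by blast
    have imA: "\<tau> ` ?A = ?A" using endo_inj_surj[OF finA invA] \<tau>inj by (simp add: inj_on_subset)
    have AS: "?A \<subseteq> S" using AJD[OF JK] by (auto simp: D_def)
    have inj: "inj (\<sigma> J)"
    proof (rule injI)
      fix x y assume e: "\<sigma> J x = \<sigma> J y"
      show "x = y"
      proof (cases "x \<in> ?A"; cases "y \<in> ?A")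
        assume "x \<in> ?A" "y \<in> ?A" thus ?thesis using e \<tau>inj by (simp add: \<sigma>_def inj_eq)
      next
        assume a: "x \<in> ?A" "y \<notin> ?A"
        hence "\<tau> x = y" using e by (simp add: \<sigma>_def)
        moreover have "\<tau> x \<in> ?A" using invA a by blast
        ultimately show ?thesis using a by simp
      next
        assume a: "x \<notin> ?A" "y \<in> ?A"
        hence "\<tau> y = x" using e by (simp add: \<sigma>_def)
        moreover have "\<tau> y \<in> ?A" using invA a by blast
        ultimately show ?thesis using a by simp
      next
        assume "x \<notin> ?A" "y \<notin> ?A" thus ?thesis using e by (simp add: \<sigma>_def)
      qed
    qed
    have surj: "surj (\<sigma> J)"
    proof (rule surjI[where f = "\<lambda>y. if y \<in> ?A then inv_into ?A \<tau> y else y"])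
      fix y show "\<sigma> J (if y \<in> ?A then inv_into ?A \<tau> y else y) = y"
      proof (cases "y \<in> ?A")
        case True
        hence "inv_into ?A \<tau> y \<in> ?A" "\<tau> (inv_into ?A \<tau> y) = y" using imA
          by (metis inv_into_into, metis f_inv_into_f)
        thus ?thesis using True by (simp add: \<sigma>_def)
      qed (simp add: \<sigma>_def)
    qed
    have perm: "\<sigma> J permutes S"
      by (rule permutesI_inj_surj[OF inj surj]) (use AS in \<open>auto simp: \<sigma>_def\<close>)
    have h1: "{i\<in>{1..n}. id i \<noteq> \<sigma> J i} = ?A"
    proof (intro equalityI subsetI)
      fix i assume "i \<in> {i\<in>{1..n}. id i \<noteq> \<sigma> J i}"
      thus "i \<in> ?A" unfolding \<sigma>_def by (cases "i \<in> ?A") simp_all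
    next
      fix i assume iA: "i \<in> ?A"
      hence "i \<in> D" using AJD[OF JK] by blast
      thus "i \<in> {i\<in>{1..n}. id i \<noteq> \<sigma> J i}" using iA unfolding \<sigma>_def D_def S_def by simp
    qed
    have h2: "{i\<in>{1..n}. \<tau> i \<noteq> \<sigma> J i} = AJ (K - J)"
    proof -
      have "{i\<in>{1..n}. \<tau> i \<noteq> \<sigma> J i} = D - ?A"
      proof (intro equalityI subsetI)
        fix i assume i: "i \<in> {i\<in>{1..n}. \<tau> i \<noteq> \<sigma> J i}"
        have "i \<notin> ?A"
        proof
          assume "i \<in> ?A" hence "\<sigma> J i = \<tau> i" by (simp add: \<sigma>_def)
          thus False using i by simp
        qed
        moreover have si: "\<sigma> J i = i" using \<open>i \<notin> ?A\<close> by (simp add: \<sigma>_def)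
        moreover have "i \<in> S" "\<tau> i \<noteq> \<sigma> J i" using i unfolding S_def by blast+
        ultimately have "i \<notin> ?A" "i \<in> S" "\<tau> i \<noteq> i" by metis+
        thus "i \<in> D - ?A" unfolding D_def by blast
      next
        fix i assume i: "i \<in> D - ?A"
        hence "\<sigma> J i = i" by (simp add: \<sigma>_def)
        moreover have "i \<in> S" "\<tau> i \<noteq> i" using i unfolding D_def by blast+
        ultimately show "i \<in> {i\<in>{1..n}. \<tau> i \<noteq> \<sigma> J i}" unfolding S_def by simp
      qed
      also have "\<dots> = AJ (K - J)"
      proof (intro equalityI subsetI)
        fix x assume "x \<in> D - ?A" thus "x \<in> AJ (K - J)" using DU by (auto simp: AJ_def)
      next
        fix x assume "x \<in> AJ (K - J)"
        then obtain k where k: "k \<in> K" "k \<notin> J" "x \<in> B k" by (auto simp: AJ_def)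
        have "x \<notin> B k'" if "k' \<in> J" for k'
        proof
          assume "x \<in> B k'"
          hence "x \<in> B k \<inter> B k'" using k by simp
          moreover have "k \<noteq> k'" using k that by auto
          ultimately show False using disj k JK that by blast
        qed
        thus "x \<in> D - ?A" using k DU by (auto simp: AJ_def)
      qed
      finally show ?thesis .
    qed
    have "hdist n id (\<sigma> J) = r" using h1 cardAJ[OF JK] JJ JJJ by (simp add: hdist_def)
    moreover have "hdist n \<tau> (\<sigma> J) = r" using h2 cardAJ[of "K - J"] JJ JJJ by (simp add: hdist_def)
    ultimately show ?thesis using perm \<tau>S
      by (simp add: X_def ball_perm_def Sym_def S_def)
  qed
  have "inj_on \<sigma> JJ"
  proof (rule inj_onI)
    fix J J' assume J: "J \<in> JJ" and J': "J' \<in> JJ" and e: "\<sigma> J = \<sigma> J'"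
    have JK: "J \<subseteq> K" "J' \<subseteq> K" using JJ J J' by auto
    have memA: "i \<in> AJ L \<longleftrightarrow> i \<in> D \<and> \<sigma> L i \<noteq> i" if LK: "L \<subseteq> K" for L i
    proof
      assume iA: "i \<in> AJ L"
      hence "i \<in> D" using AJD[OF LK] by blast
      moreover hence "\<tau> i \<noteq> i" unfolding D_def by blast
      moreover have "\<sigma> L i = \<tau> i" using iA unfolding \<sigma>_def by simp
      ultimately show "i \<in> D \<and> \<sigma> L i \<noteq> i" by simp
    next
      assume "i \<in> D \<and> \<sigma> L i \<noteq> i"
      thus "i \<in> AJ L" unfolding \<sigma>_def by (cases "i \<in> AJ L") simp_all
    qed
    have AA: "AJ J = AJ J'"
    proof (intro equalityI subsetI)
      fix i assume "i \<in> AJ J" thus "i \<in> AJ J'" using memA[OF JK(1), of i] memA[OF JK(2), of i] e by simp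
    next
      fix i assume "i \<in> AJ J'" thus "i \<in> AJ J" using memA[OF JK(1), of i] memA[OF JK(2), of i] e by simp
    qed
    have sub: "L \<subseteq> L'" if LK: "L \<subseteq> K" "L' \<subseteq> K" and LL: "AJ L = AJ L'" for L L'
    proof
      fix k assume k: "k \<in> L"
      have kK: "k \<in> K" using k LK by blast
      obtain x where x: "x \<in> B k" using blk kK by blast
      hence "x \<in> AJ L" using k unfolding AJ_def by blast
      hence "x \<in> AJ L'" using LL by simp
      then obtain k' where k': "k' \<in> L'" "x \<in> B k'" unfolding AJ_def by blast
      have "k' \<in> K" using k' LK by blast
      show "k \<in> L'"
      proof (rule ccontr)
        assume "k \<notin> L'"
        hence "k \<noteq> k'" using k' by blast
        hence "B k \<inter> B k' = {}" using disj kK \<open>k' \<in> K\<close> by blast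
        thus False using x k' by blast
      qed
    qed
    show "J = J'" using sub[OF JK AA] sub[OF JK(2,1) AA[symmetric]] by (rule equalityI)
  qed
  moreover have "\<sigma> ` JJ \<subseteq> X" using mem by auto
  moreover have "finite X"
  proof -
    have "X \<subseteq> {p. p permutes S}" by (auto simp: X_def ball_perm_def Sym_def S_def)
    thus ?thesis using finite_permutations[OF finS] finite_subset by blast
  qed
  ultimately show ?thesis unfolding X_def by (rule card_inj_on_le)
qed


definition tauE :: "nat \<Rightarrow> nat \<Rightarrow> nat" where
  "tauE t i = (if 1 \<le> i \<and> i \<le> 4*t then (if odd i then i+1 else i-1) else i)"

lemma tauE_invol: "tauE t (tauE t i) = i"
  unfolding tauE_def by presburger

lemma tauE_fix: "tauE t i \<noteq> i \<longleftrightarrow> 1 \<le> i \<and> i \<le> 4*t"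
  unfolding tauE_def by presburger

lemma even_lower:
  assumes "n \<ge> 4*t"
  shows "\<exists>p q. p \<in> Sym n \<and> q \<in> Sym n \<and> 2*(2*t) \<le> hdist n p q \<and>
     (2*t choose t) \<le> card (ball_perm n (2*t) p \<inter> ball_perm n (2*t) q)"
proof -
  define \<tau> where "\<tau> = tauE t"
  have inj: "inj \<tau>" unfolding \<tau>_def by (metis injI tauE_invol)
  have surj: "surj \<tau>" unfolding \<tau>_def by (metis surjI tauE_invol)
  have \<tau>S: "\<tau> permutes {1..n}"
    by (rule permutesI_inj_surj[OF inj surj]) (use assms in \<open>auto simp: \<tau>_def tauE_def\<close>)
  define B where "B j = {2*j-1, 2*j}" for j :: nat
  define K where "K = {1..2*t}"
  define JJ where "JJ = {J. J \<subseteq> K \<and> card J = t}"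
  have cB: "card (B j) = 2" if "j \<in> K" for j using that by (auto simp: B_def K_def card_insert_if)
  have sumB: "sum (\<lambda>k. card (B k)) J = 2 * card J" if "J \<subseteq> K" for J
    using that cB by (simp add: subset_iff)
  have D: "{i\<in>{1..n}. \<tau> i \<noteq> i} = {1..4*t}" using assms by (auto simp: \<tau>_def tauE_fix)
  have DB: "{i\<in>{1..n}. \<tau> i \<noteq> i} = \<Union>(B ` K)"
  proof -
    have "{1..4*t} = \<Union>(B ` K)"
    proof (intro equalityI subsetI)
      fix i assume i: "i \<in> {1..4*t}"
      hence "(i+1) div 2 \<in> K" "i \<in> B ((i+1) div 2)" unfolding K_def B_def by auto
      thus "i \<in> \<Union>(B ` K)" by blast
    next
      fix i assume "i \<in> \<Union>(B ` K)"
      then obtain k where "k \<in> K" "i = 2*k-1 \<or> i = 2*k" by (auto simp: B_def)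
      thus "i \<in> {1..4*t}" unfolding K_def by auto
    qed
    thus ?thesis using D by simp
  qed
  have disj: "\<forall>k\<in>K. \<forall>k'\<in>K. k \<noteq> k' \<longrightarrow> B k \<inter> B k' = {}"
  proof (intro ballI impI)
    fix k k' assume "k \<in> K" "k' \<in> K" "k \<noteq> k'"
    hence "2*k-1 \<noteq> 2*k'-1" "2*k-1 \<noteq> 2*k'" "2*k \<noteq> 2*k'-1" "2*k \<noteq> 2*k'"
      unfolding K_def by auto
    thus "B k \<inter> B k' = {}" unfolding B_def by auto
  qed
  have t1: "\<tau> (2*k-1) = 2*k" "\<tau> (2*k) = 2*k-1" if "k \<in> K" for k
  proof -
    have "1 \<le> k" "k \<le> 2*t" using that by (auto simp: K_def)
    thus "\<tau> (2*k-1) = 2*k" "\<tau> (2*k) = 2*k-1" unfolding \<tau>_def tauE_def by presburger+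
  qed
  have blk: "\<forall>k\<in>K. B k \<noteq> {} \<and> finite (B k) \<and> \<tau> ` B k \<subseteq> B k"
    using t1 by (auto simp: B_def)
  have JJp: "\<forall>J\<in>JJ. J \<subseteq> K \<and> sum (\<lambda>k. card (B k)) J = 2*t \<and> sum (\<lambda>k. card (B k)) (K - J) = 2*t"
  proof
    fix J assume J: "J \<in> JJ"
    hence JK: "J \<subseteq> K" "card J = t" by (auto simp: JJ_def)
    have "card (K - J) = t" using JK by (simp add: card_Diff_subset K_def finite_subset)
    thus "J \<subseteq> K \<and> sum (\<lambda>k. card (B k)) J = 2*t \<and> sum (\<lambda>k. card (B k)) (K - J) = 2*t"
      using JK sumB[of J] sumB[of "K - J"] by auto
  qed
  have "card JJ \<le> card (ball_perm n (2*t) id \<inter> ball_perm n (2*t) \<tau>)"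
    by (rule construct[OF \<tau>S _ disj blk DB JJp]) (simp add: K_def)
  moreover have "card JJ = 2*t choose t" unfolding JJ_def using n_subsets[of K t] by (simp add: K_def)
  moreover have "hdist n id \<tau> = 4*t"
  proof -
    have "{i\<in>{1..n}. id i \<noteq> \<tau> i} = {i\<in>{1..n}. \<tau> i \<noteq> i}"
      by (rule Collect_cong) (metis id_apply)
    hence "{i\<in>{1..n}. id i \<noteq> \<tau> i} = {1..4*t}" using D by (rule trans)
    thus ?thesis by (simp add: hdist_def)
  qed
  moreover have "id \<in> Sym n" "\<tau> \<in> Sym n" using \<tau>S by (auto simp: Sym_def)
  ultimately have "2*(2*t) \<le> hdist n id \<tau>" "(2*t choose t) \<le> card (ball_perm n (2*t) id \<inter> ball_perm n (2*t) \<tau>)"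
    "id \<in> Sym n" "\<tau> \<in> Sym n" by simp_all
  thus ?thesis by blast
qed

definition tauO :: "nat \<Rightarrow> nat \<Rightarrow> nat" where
  "tauO t i = (if i = 3 then 1 else if i = 6 then 4 else if i = 1 \<or> i = 2 \<or> i = 4 \<or> i = 5 then i+1
     else if 7 \<le> i \<and> i \<le> 4*t+2 then (if odd i then i+1 else i-1) else i)"

definition gO :: "nat \<Rightarrow> nat \<Rightarrow> nat" where
  "gO t i = (if i = 1 then 3 else if i = 4 then 6 else if i = 2 \<or> i = 3 \<or> i = 5 \<or> i = 6 then i-1
     else if 7 \<le> i \<and> i \<le> 4*t+2 then (if odd i then i+1 else i-1) else i)"

lemma gO_tauO: "gO t (tauO t i) = i"
proof (cases "i \<le> 6")
  case True
  hence "i = 0 \<or> i = 1 \<or> i = 2 \<or> i = 3 \<or> i = 4 \<or> i = 5 \<or> i = 6" by linarith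
  thus ?thesis by (elim disjE) (simp_all add: tauO_def gO_def)
next
  case False
  thus ?thesis unfolding tauO_def gO_def by (auto split: if_splits; presburger)
qed

lemma tauO_gO: "tauO t (gO t i) = i"
proof (cases "i \<le> 6")
  case True
  hence "i = 0 \<or> i = 1 \<or> i = 2 \<or> i = 3 \<or> i = 4 \<or> i = 5 \<or> i = 6" by linarith
  thus ?thesis by (elim disjE) (simp_all add: tauO_def gO_def)
next
  case False
  thus ?thesis unfolding tauO_def gO_def by (auto split: if_splits; presburger)
qed

lemma tauO_fix: "1 \<le> t \<Longrightarrow> tauO t i \<noteq> i \<longleftrightarrow> 1 \<le> i \<and> i \<le> 4*t+2"
proof (cases "i \<le> 6")
  case True
  assume t: "1 \<le> t"
  from True have "i = 0 \<or> i = 1 \<or> i = 2 \<or> i = 3 \<or> i = 4 \<or> i = 5 \<or> i = 6" by linarith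
  thus ?thesis using t by (elim disjE) (simp_all add: tauO_def)
next
  case False
  thus ?thesis unfolding tauO_def by (auto split: if_splits; presburger)
qed

lemma tauO_pair: "2 \<le> j \<Longrightarrow> j \<le> 2*t - 1 \<Longrightarrow> tauO t (2*j+3) = 2*j+4 \<and> tauO t (2*j+4) = 2*j+3"
  unfolding tauO_def by auto
lemma odd_lower:
  assumes t: "t \<ge> 1" and n: "n \<ge> 4*t+2"
  shows "\<exists>p q. p \<in> Sym n \<and> q \<in> Sym n \<and> 2*(2*t+1) \<le> hdist n p q \<and>
     2 * ((2*t-2) choose (t-1)) \<le> card (ball_perm n (2*t+1) p \<inter> ball_perm n (2*t+1) q)"
proof -
  define \<tau> where "\<tau> = tauO t"
  have inj: "inj \<tau>" unfolding \<tau>_def by (metis injI gO_tauO)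
  have surj: "surj \<tau>" unfolding \<tau>_def by (metis surjI tauO_gO)
  have fx: "\<tau> i \<noteq> i \<longleftrightarrow> 1 \<le> i \<and> i \<le> 4*t+2" for i unfolding \<tau>_def using tauO_fix[OF t] .
  have \<tau>S: "\<tau> permutes {1..n}"
  proof (rule permutesI_inj_surj[OF inj surj])
    fix x assume "x \<notin> {1..n}"
    hence "\<not> (1 \<le> x \<and> x \<le> 4*t+2)" using n by auto
    thus "\<tau> x = x" using fx by blast
  qed
  define B where "B j = (if j = 0 then {1,2,3} else if j = 1 then {4,5,6} else {2*j+3, 2*j+4})" for j :: nat
  define K2 where "K2 = {2..2*t-1}"
  define K where "K = {0..2*t-1}"
  have KK: "K = insert 0 (insert 1 K2)" using t unfolding K_def K2_def by auto
  have cK2: "card K2 = 2*t-2" by (simp add: K2_def)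
  have cB2: "card (B j) = 2" if "j \<in> K2" for j using that by (auto simp: B_def K2_def)
  have sumB2: "sum (\<lambda>k. card (B k)) J = 2 * card J" if "J \<subseteq> K2" for J
  proof -
    have "sum (\<lambda>k. card (B k)) J = sum (\<lambda>k. 2) J" using that cB2 by (intro sum.cong) auto
    thus ?thesis by simp
  qed
  have cB01: "card (B 0) = 3" "card (B 1) = 3" by (simp_all add: B_def)
  have sumK: "sum (\<lambda>k. card (B k)) K = 4*t+2"
  proof -
    have "sum (\<lambda>k. card (B k)) K = card (B 0) + (card (B 1) + sum (\<lambda>k. card (B k)) K2)"
      unfolding KK by (simp add: K2_def)
    also have "\<dots> = 4*t+2" using sumB2[of K2] cK2 cB01 t by simp
    finally show ?thesis .
  qed
  have D: "{i\<in>{1..n}. \<tau> i \<noteq> i} = {1..4*t+2}"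
  proof (intro equalityI subsetI)
    fix i assume "i \<in> {i\<in>{1..n}. \<tau> i \<noteq> i}"
    hence "\<tau> i \<noteq> i" by blast
    hence "1 \<le> i \<and> i \<le> 4*t+2" using fx by blast
    thus "i \<in> {1..4*t+2}" by simp
  next
    fix i assume "i \<in> {1..4*t+2}"
    hence i: "1 \<le> i \<and> i \<le> 4*t+2" by simp
    hence "\<tau> i \<noteq> i" using fx by blast
    moreover have "i \<in> {1..n}" using i n by simp
    ultimately show "i \<in> {i\<in>{1..n}. \<tau> i \<noteq> i}" by blast
  qed
  have DB: "{i\<in>{1..n}. \<tau> i \<noteq> i} = \<Union>(B ` K)"
  proof -
    have "{1..4*t+2} = \<Union>(B ` K)"
    proof (intro equalityI subsetI)
      fix i assume i: "i \<in> {1..4*t+2}"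
      show "i \<in> \<Union>(B ` K)"
      proof (cases "i \<le> 6")
        case True
        hence "i \<in> B 0 \<or> i \<in> B 1" using i by (auto simp: B_def)
        moreover have "0 \<in> K" "1 \<in> K" using KK by auto
        ultimately show ?thesis by blast
      next
        case False
        define j where "j = (i - 3) div 2"
        have "j \<in> K2" using False i unfolding j_def K2_def by auto
        moreover have "i \<in> B j" using False unfolding j_def B_def by auto
        ultimately show ?thesis using KK by blast
      qed
    next
      fix i assume "i \<in> \<Union>(B ` K)"
      then obtain k where k: "k \<in> K" "i \<in> B k" by blast
      show "i \<in> {1..4*t+2}"
      proof (cases "k \<le> 1")
        case True thus ?thesis using k t by (auto simp: B_def split: if_splits)
      next
        case False thus ?thesis using k t by (auto simp: B_def K_def)
      qed
    qed
    thus ?thesis using D by simp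
  qed
  have disj: "\<forall>k\<in>K. \<forall>k'\<in>K. k \<noteq> k' \<longrightarrow> B k \<inter> B k' = {}"
  proof (intro ballI impI)
    fix k k' assume "k \<in> K" "k' \<in> K" "k \<noteq> k'"
    thus "B k \<inter> B k' = {}" unfolding B_def by auto
  qed
  have blk: "\<forall>k\<in>K. B k \<noteq> {} \<and> finite (B k) \<and> \<tau> ` B k \<subseteq> B k"
  proof
    fix k assume k: "k \<in> K"
    have "\<tau> ` B k \<subseteq> B k"
    proof (cases "k \<le> 1")
      case True
      hence "k = 0 \<or> k = 1" by auto
      thus ?thesis by (elim disjE) (auto simp: B_def \<tau>_def tauO_def)
    next
      case False
      hence "2 \<le> k" "k \<le> 2*t-1" using k by (auto simp: K_def)
      thus ?thesis using tauO_pair[of k t] False by (auto simp: B_def \<tau>_def)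
    qed
    thus "B k \<noteq> {} \<and> finite (B k) \<and> \<tau> ` B k \<subseteq> B k" by (simp add: B_def)
  qed
  define JJ where "JJ = (\<lambda>(c,J). insert c J) ` ({0,1::nat} \<times> {J. J \<subseteq> K2 \<and> card J = t-1})"
  have finK: "finite K" by (simp add: K_def)
  have JJp: "\<forall>J\<in>JJ. J \<subseteq> K \<and> sum (\<lambda>k. card (B k)) J = 2*t+1 \<and> sum (\<lambda>k. card (B k)) (K - J) = 2*t+1"
  proof
    fix X assume "X \<in> JJ"
    then obtain c J where cJ: "c \<in> {0,1}" "J \<subseteq> K2" "card J = t-1" "X = insert c J"
      by (auto simp: JJ_def)
    have cJ': "c \<notin> J" using cJ by (auto simp: K2_def)
    have XK: "X \<subseteq> K" using cJ KK by auto
    have finJ: "finite J" using cJ(2) finite_subset by (auto simp: K2_def)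
    have "sum (\<lambda>k. card (B k)) X = card (B c) + sum (\<lambda>k. card (B k)) J"
      using cJ cJ' finJ by simp
    also have "\<dots> = 2*t+1" using cJ cB01 sumB2[of J] t by auto
    finally have sX: "sum (\<lambda>k. card (B k)) X = 2*t+1" .
    have "sum (\<lambda>k. card (B k)) K = sum (\<lambda>k. card (B k)) X + sum (\<lambda>k. card (B k)) (K - X)"
      using finK XK by (metis add.commute sum.subset_diff)
    hence "sum (\<lambda>k. card (B k)) (K - X) = 2*t+1" using sumK sX by simp
    thus "X \<subseteq> K \<and> sum (\<lambda>k. card (B k)) X = 2*t+1 \<and> sum (\<lambda>k. card (B k)) (K - X) = 2*t+1"
      using XK sX by simp
  qed
  have "card JJ \<le> card (ball_perm n (2*t+1) id \<inter> ball_perm n (2*t+1) \<tau>)"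
    by (rule construct[OF \<tau>S finK disj blk DB JJp])
  moreover have "card JJ = 2 * ((2*t-2) choose (t-1))"
  proof -
    have "inj_on (\<lambda>(c,J). insert c J) ({0,1::nat} \<times> {J. J \<subseteq> K2 \<and> card J = t-1})"
    proof (rule inj_onI)
      fix x y assume x: "x \<in> {0,1::nat} \<times> {J. J \<subseteq> K2 \<and> card J = t-1}"
        and y: "y \<in> {0,1::nat} \<times> {J. J \<subseteq> K2 \<and> card J = t-1}"
        and e: "(\<lambda>(c,J). insert c J) x = (\<lambda>(c,J). insert c J) y"
      obtain c J where xx: "x = (c,J)" "c \<in> {0,1}" "J \<subseteq> K2" using x by auto
      obtain c' J' where yy: "y = (c',J')" "c' \<in> {0,1}" "J' \<subseteq> K2" using y by auto
      have e': "insert c J = insert c' J'" using e xx yy by simp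
      have n1: "c \<notin> J" "c' \<notin> J'" "c \<notin> J'" "c' \<notin> J" using xx yy by (auto simp: K2_def)
      have "c \<in> insert c' J'" using e' by blast
      hence cc: "c = c'" using n1 by blast
      have "J = insert c J - {c}" using n1 by blast
      also have "\<dots> = insert c' J' - {c'}" using e' cc by simp
      also have "\<dots> = J'" using n1 by blast
      finally show "x = y" using xx yy cc by simp
    qed
    hence "card JJ = card ({0,1::nat} \<times> {J. J \<subseteq> K2 \<and> card J = t-1})"
      unfolding JJ_def by (rule card_image)
    also have "\<dots> = 2 * card {J. J \<subseteq> K2 \<and> card J = t-1}"
      by (simp add: card_cartesian_product)
    also have "card {J. J \<subseteq> K2 \<and> card J = t-1} = (2*t-2) choose (t-1)"
      using n_subsets[of K2 "t-1"] cK2 by (simp add: K2_def)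
    finally show ?thesis .
  qed
  moreover have "hdist n id \<tau> = 4*t+2"
  proof -
    have "{i\<in>{1..n}. id i \<noteq> \<tau> i} = {i\<in>{1..n}. \<tau> i \<noteq> i}"
      by (rule Collect_cong) (metis id_apply)
    hence "{i\<in>{1..n}. id i \<noteq> \<tau> i} = {1..4*t+2}" using D by (rule trans)
    thus ?thesis by (simp add: hdist_def)
  qed
  moreover have "id \<in> Sym n" "\<tau> \<in> Sym n" using \<tau>S by (auto simp: Sym_def)
  ultimately have "2*(2*t+1) \<le> hdist n id \<tau>"
    "2 * ((2*t-2) choose (t-1)) \<le> card (ball_perm n (2*t+1) id \<inter> ball_perm n (2*t+1) \<tau>)"
    "id \<in> Sym n" "\<tau> \<in> Sym n" by simp_all
  thus ?thesis by blast
qed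


theorem theorem1:
  fixes t r n :: nat
  assumes "t \<ge> 2" and "r = 2*t \<or> r = 2*t + 1" and "n \<ge> 2*r"
  shows "Nint n (2*r) r =
    (if r = 2*t then (2*t) choose t else 2 * ((2*t - 2) choose (t - 1)))"
proof -
  define bnd where "bnd = (if r = 2*t then (2*t) choose t else 2 * ((2*t - 2) choose (t - 1)))"
  define V where "V = {card (ball_perm n r p \<inter> ball_perm n r q) | p q.
      p \<in> Sym n \<and> q \<in> Sym n \<and> 2*r \<le> hdist n p q}"
  have t1: "t \<ge> 1" using assms by simp
  have up: "card (ball_perm n r p \<inter> ball_perm n r q) \<le> bnd"
    if p: "p \<in> Sym n" and q: "q \<in> Sym n" and d: "2*r \<le> hdist n p q" for p q
  proof (cases "ball_perm n r p \<inter> ball_perm n r q = {}")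
    case True thus ?thesis by simp
  next
    case False
    from upper_red[OF p q d False] obtain P :: "nat set set" where
      P: "finite P" "\<forall>b\<in>P. 2 \<le> card b" "sum card P = 2*r"
      "card (ball_perm n r p \<inter> ball_perm n r q) \<le> card {Q. Q \<subseteq> P \<and> sum card Q = r}"
      by blast
    show ?thesis
    proof (cases "r = 2*t")
      case True
      have "card {Q. Q \<subseteq> P \<and> sum card Q = r} \<le> r choose (r div 2)"
        by (rule weight_even[OF P(1-3)])
      thus ?thesis using P(4) True by (simp add: bnd_def)
    next
      case False
      hence r: "r = 2*t+1" using assms by simp
      have "card {Q. Q \<subseteq> P \<and> sum card Q = r} \<le> 2 * ((2*t-2) choose (t-1))"
        by (rule weight_odd[OF P(1-3) r t1])
      thus ?thesis using P(4) False by (simp add: bnd_def)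
    qed
  qed
  have ex: "\<exists>p q. p \<in> Sym n \<and> q \<in> Sym n \<and> 2*r \<le> hdist n p q \<and>
     bnd \<le> card (ball_perm n r p \<inter> ball_perm n r q)"
  proof (cases "r = 2*t")
    case True
    have "n \<ge> 4*t" using assms True by simp
    from even_lower[OF this] show ?thesis using True by (simp add: bnd_def)
  next
    case False
    hence r: "r = 2*t+1" using assms by simp
    have "n \<ge> 4*t+2" using assms r by simp
    from odd_lower[OF t1 this] show ?thesis using r by (simp add: bnd_def)
  qed
  have bV: "bnd \<in> V"
  proof -
    obtain p q where pq: "p \<in> Sym n" "q \<in> Sym n" "2*r \<le> hdist n p q"
      "bnd \<le> card (ball_perm n r p \<inter> ball_perm n r q)" using ex by blast
    have "card (ball_perm n r p \<inter> ball_perm n r q) = bnd" using up[OF pq(1-3)] pq(4) by simp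
    thus ?thesis using pq unfolding V_def by blast
  qed
  have finV: "finite V"
  proof -
    have finSym: "finite (Sym n)" unfolding Sym_def by (rule finite_permutations) simp
    have "V \<subseteq> {0..card (Sym n)}"
    proof
      fix v assume "v \<in> V"
      then obtain p q where v: "v = card (ball_perm n r p \<inter> ball_perm n r q)" unfolding V_def by blast
      have "ball_perm n r p \<inter> ball_perm n r q \<subseteq> Sym n" by (auto simp: ball_perm_def)
      hence "v \<le> card (Sym n)" using v finSym by (simp add: card_mono)
      thus "v \<in> {0..card (Sym n)}" by simp
    qed
    thus ?thesis using finite_subset by blast
  qed
  have "Nint n (2*r) r = Max (insert 0 V)" unfolding Nint_def V_def by simp
  also have "\<dots> = bnd"
  proof (rule Max_eqI)
    show "finite (insert 0 V)" using finV by simp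
    show "bnd \<in> insert 0 V" using bV by simp
    fix y assume "y \<in> insert 0 V"
    thus "y \<le> bnd" unfolding V_def using up by auto
  qed
  finally show ?thesis by (simp add: bnd_def)
qed

end
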